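(* Let $F\colon\mathbb{A}\to\mathbb{B}$ be a double functor between double categories. Then $F$ is a double fibration if and only if both 2-functors $\mathbf{H}F\colon\mathbf{H}\mathbb{A}\to\mathbf{H}\mathbb{B}$ and $\mathcal{V}F\colon\mathcal{V}\mathbb{A}\to\mathcal{V}\mathbb{B}$ are Lack fibrations.
   Context: A double category has objects, horizontal morphisms, vertical morphisms and squares; a square $\alpha\colon(u\,{}^{a}_{b}\,v)$ has top horizontal boundary $a\colon A\to B$, bottom horizontal boundary $b\colon A'\to B'$, left vertical boundary $u\colon A\to A'$ and right vertical boundary $v\colon B\to B'$; compositions are strictly associative and unital and satisfy interchange; $e_A$ is the vertical identity on $A$; a square is vertically invertible if it is invertible for vertical composition. $\mathbf{H}\mathbb{A}$ is the underlying horizontal 2-category of $\mathbb{A}$: objects and horizontal morphisms of $\mathbb{A}$, and as 2-cells $a\Rightarrow b$ the squares $(e_A\,{}^{a}_{b}\,e_B)$. $\mathcal{V}\mathbb{A}$ is the 2-category whose objects are vertical morphisms $u\colon A\to A'$ of $\mathbb{A}$, whose morphisms $u\to v$ are squares with left boundary $u$ and right boundary $v$ (composed horizontally), and whose 2-cells from $\alpha\colon(u\,{}^{a}_{b}\,v)$ to $\beta\colon(u\,{}^{c}_{d}\,v)$ are pairs of squares $\sigma_0\colon(e_A\,{}^{a}_{c}\,e_B)$, $\sigma_1\colon(e_{A'}\,{}^{b}_{d}\,e_{B'})$ such that $\sigma_0$ vertically composed on top of $\beta$ equals $\alpha$ vertically composed on top of $\sigma_1$. A horizontal morphism is a horizontal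 equivalence if it is an equivalence in $\mathbf{H}\mathbb{A}$; a square is weakly horizontally invertible if it is an equivalence in $\mathcal{V}\mathbb{A}$. A 2-functor $G\colon\mathcal{A}\to\mathcal{B}$ is a Lack fibration if (f1) for every equivalence $b\colon B\to GC$ in $\mathcal{B}$ there is an equivalence $a\colon A\to C$ in $\mathcal{A}$ with $Ga=b$; (f2) for every morphism $c\colon A\to C$ in $\mathcal{A}$ and invertible 2-cell $\beta\colon b\cong Gc$ in $\mathcal{B}$ there is an invertible 2-cell $\alpha\colon a\cong c$ in $\mathcal{A}$ with $G\alpha=\beta$. A double functor $F\colon\mathbb{A}\to\mathbb{B}$ is a double fibration if (df1) for every horizontal equivalence $b\colon B\to FC$ in $\mathbb{B}$ there is a horizontal equivalence $a\colon A\to C$ in $\mathbb{A}$ with $Fa=b$; (df2) for every horizontal morphism $c\colon A\to C$ in $\mathbb{A}$ and every vertically invertible square $\beta\colon(e_{FA}\,{}^{b}_{Fc}\,e_{FC})$ in $\mathbb{B}$ there is a vertically invertible square $\alpha\colon(e_A\,{}^{a}_{c}\,e_C)$ in $\mathbb{A}$ with $F\alpha=\beta$; (df3) for every vertical morphism $u'\colon C\to C'$ in $\mathbb{A}$ and every weakly horizontally invertible square $\beta$ in $\mathbb{B}$ with right boundary $Fu'$ (and some left boundary $v\colon B\to B'$), there is a weakly horizontally invertible square $\alpha$ in $\mathbb{A}$ with right boundary $u'$ and $F\alpha=\beta$. *)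

theory Defs
  imports Main
begin

text \<open>Conventions: all compositions are written in diagrammatic order.
  hcomp a b is a followed by b (requires hcod a = hdom b);
  vcomp u v is u followed by v (requires vcod u = vdom v);
  sq_hcomp al be places al to the left of be (requires right al = left be);
  sq_vcomp al be places al on top of be (requires bot al = top be).
  sq_hid u is the horizontal identity square on the vertical morphism u,
  sq_vid a is the vertical identity square on the horizontal morphism a.\<close>

record ('o, 'h, 'v, 's) dblcat =
  Ob :: "'o set"
  HMor :: "'h set"
  VMor :: "'v set"
  Sq :: "'s set"
  hdom :: "'h \<Rightarrow> 'o"
  hcod :: "'h \<Rightarrow> 'o"
  vdom :: "'v \<Rightarrow> 'o"
  vcod :: "'v \<Rightarrow> 'o"
  sq_top :: "'s \<Rightarrow> 'h"
  sq_bot :: "'s \<Rightarrow> 'h"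
  sq_left :: "'s \<Rightarrow> 'v"
  sq_right :: "'s \<Rightarrow> 'v"
  hcomp :: "'h \<Rightarrow> 'h \<Rightarrow> 'h"
  hid :: "'o \<Rightarrow> 'h"
  vcomp :: "'v \<Rightarrow> 'v \<Rightarrow> 'v"
  vid :: "'o \<Rightarrow> 'v"
  sq_hcomp :: "'s \<Rightarrow> 's \<Rightarrow> 's"
  sq_hid :: "'v \<Rightarrow> 's"
  sq_vcomp :: "'s \<Rightarrow> 's \<Rightarrow> 's"
  sq_vid :: "'h \<Rightarrow> 's"

definition double_category :: "('o, 'h, 'v, 's, 'x) dblcat_scheme \<Rightarrow> bool" where
  "double_category D \<longleftrightarrow>
    \<comment> \<open>boundaries of horizontal and vertical morphisms\<close>
    (\<forall>a\<in>HMor D. hdom D a \<in> Ob D \<and> hcod D a \<in> Ob D) \<and>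
    (\<forall>u\<in>VMor D. vdom D u \<in> Ob D \<and> vcod D u \<in> Ob D) \<and>
    \<comment> \<open>horizontal category\<close>
    (\<forall>X\<in>Ob D. hid D X \<in> HMor D \<and> hdom D (hid D X) = X \<and> hcod D (hid D X) = X) \<and>
    (\<forall>a\<in>HMor D. \<forall>b\<in>HMor D. hcod D a = hdom D b \<longrightarrow>
        hcomp D a b \<in> HMor D \<and> hdom D (hcomp D a b) = hdom D a \<and> hcod D (hcomp D a b) = hcod D b) \<and>
    (\<forall>a\<in>HMor D. hcomp D (hid D (hdom D a)) a = a \<and> hcomp D a (hid D (hcod D a)) = a) \<and>
    (\<forall>a\<in>HMor D. \<forall>b\<in>HMor D. \<forall>c\<in>HMor D. hcod D a = hdom D b \<longrightarrow> hcod D b = hdom D c \<longrightarrow>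
        hcomp D (hcomp D a b) c = hcomp D a (hcomp D b c)) \<and>
    \<comment> \<open>vertical category\<close>
    (\<forall>X\<in>Ob D. vid D X \<in> VMor D \<and> vdom D (vid D X) = X \<and> vcod D (vid D X) = X) \<and>
    (\<forall>u\<in>VMor D. \<forall>v\<in>VMor D. vcod D u = vdom D v \<longrightarrow>
        vcomp D u v \<in> VMor D \<and> vdom D (vcomp D u v) = vdom D u \<and> vcod D (vcomp D u v) = vcod D v) \<and>
    (\<forall>u\<in>VMor D. vcomp D (vid D (vdom D u)) u = u \<and> vcomp D u (vid D (vcod D u)) = u) \<and>
    (\<forall>u\<in>VMor D. \<forall>v\<in>VMor D. \<forall>w\<in>VMor D. vcod D u = vdom D v \<longrightarrow> vcod D v = vdom D w \<longrightarrow>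
        vcomp D (vcomp D u v) w = vcomp D u (vcomp D v w)) \<and>
    \<comment> \<open>boundaries of squares\<close>
    (\<forall>s\<in>Sq D. sq_top D s \<in> HMor D \<and> sq_bot D s \<in> HMor D \<and>
        sq_left D s \<in> VMor D \<and> sq_right D s \<in> VMor D \<and>
        hdom D (sq_top D s) = vdom D (sq_left D s) \<and> hcod D (sq_top D s) = vdom D (sq_right D s) \<and>
        hdom D (sq_bot D s) = vcod D (sq_left D s) \<and> hcod D (sq_bot D s) = vcod D (sq_right D s)) \<and>
    \<comment> \<open>horizontal composition of squares\<close>
    (\<forall>u\<in>VMor D. sq_hid D u \<in> Sq D \<and> sq_left D (sq_hid D u) = u \<and> sq_right D (sq_hid D u) = u \<and>
        sq_top D (sq_hid D u) = hid D (vdom D u) \<and> sq_bot D (sq_hid D u) = hid D (vcod D u)) \<and>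
    (\<forall>s\<in>Sq D. \<forall>t\<in>Sq D. sq_right D s = sq_left D t \<longrightarrow>
        sq_hcomp D s t \<in> Sq D \<and>
        sq_top D (sq_hcomp D s t) = hcomp D (sq_top D s) (sq_top D t) \<and>
        sq_bot D (sq_hcomp D s t) = hcomp D (sq_bot D s) (sq_bot D t) \<and>
        sq_left D (sq_hcomp D s t) = sq_left D s \<and> sq_right D (sq_hcomp D s t) = sq_right D t) \<and>
    (\<forall>s\<in>Sq D. sq_hcomp D (sq_hid D (sq_left D s)) s = s \<and> sq_hcomp D s (sq_hid D (sq_right D s)) = s) \<and>
    (\<forall>s\<in>Sq D. \<forall>t\<in>Sq D. \<forall>r\<in>Sq D. sq_right D s = sq_left D t \<longrightarrow> sq_right D t = sq_left D r \<longrightarrow>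
        sq_hcomp D (sq_hcomp D s t) r = sq_hcomp D s (sq_hcomp D t r)) \<and>
    \<comment> \<open>vertical composition of squares\<close>
    (\<forall>a\<in>HMor D. sq_vid D a \<in> Sq D \<and> sq_top D (sq_vid D a) = a \<and> sq_bot D (sq_vid D a) = a \<and>
        sq_left D (sq_vid D a) = vid D (hdom D a) \<and> sq_right D (sq_vid D a) = vid D (hcod D a)) \<and>
    (\<forall>s\<in>Sq D. \<forall>t\<in>Sq D. sq_bot D s = sq_top D t \<longrightarrow>
        sq_vcomp D s t \<in> Sq D \<and>
        sq_top D (sq_vcomp D s t) = sq_top D s \<and> sq_bot D (sq_vcomp D s t) = sq_bot D t \<and>
        sq_left D (sq_vcomp D s t) = vcomp D (sq_left D s) (sq_left D t) \<and>
        sq_right D (sq_vcomp D s t) = vcomp D (sq_right D s) (sq_right D t)) \<and>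
    (\<forall>s\<in>Sq D. sq_vcomp D (sq_vid D (sq_top D s)) s = s \<and> sq_vcomp D s (sq_vid D (sq_bot D s)) = s) \<and>
    (\<forall>s\<in>Sq D. \<forall>t\<in>Sq D. \<forall>r\<in>Sq D. sq_bot D s = sq_top D t \<longrightarrow> sq_bot D t = sq_top D r \<longrightarrow>
        sq_vcomp D (sq_vcomp D s t) r = sq_vcomp D s (sq_vcomp D t r)) \<and>
    \<comment> \<open>compatibility of identities and interchange\<close>
    (\<forall>X\<in>Ob D. sq_hid D (vid D X) = sq_vid D (hid D X)) \<and>
    (\<forall>u\<in>VMor D. \<forall>v\<in>VMor D. vcod D u = vdom D v \<longrightarrow>
        sq_hid D (vcomp D u v) = sq_vcomp D (sq_hid D u) (sq_hid D v)) \<and>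
    (\<forall>a\<in>HMor D. \<forall>b\<in>HMor D. hcod D a = hdom D b \<longrightarrow>
        sq_vid D (hcomp D a b) = sq_hcomp D (sq_vid D a) (sq_vid D b)) \<and>
    (\<forall>s\<in>Sq D. \<forall>t\<in>Sq D. \<forall>p\<in>Sq D. \<forall>q\<in>Sq D.
        sq_right D s = sq_left D t \<longrightarrow> sq_right D p = sq_left D q \<longrightarrow>
        sq_bot D s = sq_top D p \<longrightarrow> sq_bot D t = sq_top D q \<longrightarrow>
        sq_vcomp D (sq_hcomp D s t) (sq_hcomp D p q) = sq_hcomp D (sq_vcomp D s p) (sq_vcomp D t q))"

record ('o1, 'h1, 'v1, 's1, 'o2, 'h2, 'v2, 's2) dblfun =
  fob :: "'o1 \<Rightarrow> 'o2"
  fh :: "'h1 \<Rightarrow> 'h2"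
  fv :: "'v1 \<Rightarrow> 'v2"
  fsq :: "'s1 \<Rightarrow> 's2"

definition double_functor ::
  "('o1, 'h1, 'v1, 's1, 'x) dblcat_scheme \<Rightarrow> ('o2, 'h2, 'v2, 's2, 'y) dblcat_scheme \<Rightarrow>
   ('o1, 'h1, 'v1, 's1, 'o2, 'h2, 'v2, 's2) dblfun \<Rightarrow> bool" where
  "double_functor A B F \<longleftrightarrow> double_category A \<and> double_category B \<and>
    (\<forall>X\<in>Ob A. fob F X \<in> Ob B) \<and>
    (\<forall>a\<in>HMor A. fh F a \<in> HMor B \<and> hdom B (fh F a) = fob F (hdom A a) \<and> hcod B (fh F a) = fob F (hcod A a)) \<and>
    (\<forall>u\<in>VMor A. fv F u \<in> VMor B \<and> vdom B (fv F u) = fob F (vdom A u) \<and> vcod B (fv F u) = fob F (vcod A u)) \<and>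
    (\<forall>s\<in>Sq A. fsq F s \<in> Sq B \<and>
        sq_top B (fsq F s) = fh F (sq_top A s) \<and> sq_bot B (fsq F s) = fh F (sq_bot A s) \<and>
        sq_left B (fsq F s) = fv F (sq_left A s) \<and> sq_right B (fsq F s) = fv F (sq_right A s)) \<and>
    (\<forall>X\<in>Ob A. fh F (hid A X) = hid B (fob F X) \<and> fv F (vid A X) = vid B (fob F X)) \<and>
    (\<forall>a\<in>HMor A. \<forall>b\<in>HMor A. hcod A a = hdom A b \<longrightarrow> fh F (hcomp A a b) = hcomp B (fh F a) (fh F b)) \<and>
    (\<forall>u\<in>VMor A. \<forall>v\<in>VMor A. vcod A u = vdom A v \<longrightarrow> fv F (vcomp A u v) = vcomp B (fv F u) (fv F v)) \<and>
    (\<forall>u\<in>VMor A. fsq F (sq_hid A u) = sq_hid B (fv F u)) \<and>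
    (\<forall>a\<in>HMor A. fsq F (sq_vid A a) = sq_vid B (fh F a)) \<and>
    (\<forall>s\<in>Sq A. \<forall>t\<in>Sq A. sq_right A s = sq_left A t \<longrightarrow> fsq F (sq_hcomp A s t) = sq_hcomp B (fsq F s) (fsq F t)) \<and>
    (\<forall>s\<in>Sq A. \<forall>t\<in>Sq A. sq_bot A s = sq_top A t \<longrightarrow> fsq F (sq_vcomp A s t) = sq_vcomp B (fsq F s) (fsq F t))"

text \<open>comp1 f g is f followed by g; vcomp2 al be is al followed by be
  (vertical composition of 2-cells); hcomp2 is horizontal composition of 2-cells.\<close>

record ('o, 'm, 'c) twocat =
  Obj :: "'o set"
  Mor1 :: "'m set"
  Mor2 :: "'c set"
  dom1 :: "'m \<Rightarrow> 'o"
  cod1 :: "'m \<Rightarrow> 'o"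
  dom2 :: "'c \<Rightarrow> 'm"
  cod2 :: "'c \<Rightarrow> 'm"
  comp1 :: "'m \<Rightarrow> 'm \<Rightarrow> 'm"
  id1 :: "'o \<Rightarrow> 'm"
  vcomp2 :: "'c \<Rightarrow> 'c \<Rightarrow> 'c"
  hcomp2 :: "'c \<Rightarrow> 'c \<Rightarrow> 'c"
  id2 :: "'m \<Rightarrow> 'c"

definition iso2 :: "('o, 'm, 'c) twocat \<Rightarrow> 'c \<Rightarrow> bool" where
  "iso2 C th \<longleftrightarrow> th \<in> Mor2 C \<and>
    (\<exists>th'. th' \<in> Mor2 C \<and> dom2 C th' = cod2 C th \<and> cod2 C th' = dom2 C th \<and>
       vcomp2 C th th' = id2 C (dom2 C th) \<and> vcomp2 C th' th = id2 C (cod2 C th))"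

definition equiv1 :: "('o, 'm, 'c) twocat \<Rightarrow> 'm \<Rightarrow> bool" where
  "equiv1 C f \<longleftrightarrow> f \<in> Mor1 C \<and>
    (\<exists>g eta eps. g \<in> Mor1 C \<and> dom1 C g = cod1 C f \<and> cod1 C g = dom1 C f \<and>
       iso2 C eta \<and> dom2 C eta = id1 C (dom1 C f) \<and> cod2 C eta = comp1 C f g \<and>
       iso2 C eps \<and> dom2 C eps = comp1 C g f \<and> cod2 C eps = id1 C (cod1 C f))"

record ('o1, 'm1, 'c1, 'o2, 'm2, 'c2) twofun =
  gob :: "'o1 \<Rightarrow> 'o2"
  gm1 :: "'m1 \<Rightarrow> 'm2"
  gm2 :: "'c1 \<Rightarrow> 'c2"

definition lack_fibration ::
  "('o1, 'm1, 'c1) twocat \<Rightarrow> ('o2, 'm2, 'c2) twocat \<Rightarrow> ('o1, 'm1, 'c1, 'o2, 'm2, 'c2) twofun \<Rightarrow> bool" where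
  "lack_fibration C D G \<longleftrightarrow>
    (\<forall>b Y. Y \<in> Obj C \<longrightarrow> equiv1 D b \<longrightarrow> cod1 D b = gob G Y \<longrightarrow>
        (\<exists>a. equiv1 C a \<and> cod1 C a = Y \<and> gm1 G a = b)) \<and>
    (\<forall>c be. c \<in> Mor1 C \<longrightarrow> iso2 D be \<longrightarrow> cod2 D be = gm1 G c \<longrightarrow>
        (\<exists>al. iso2 C al \<and> cod2 C al = c \<and> gm2 G al = be))"

definition Hcat :: "('o, 'h, 'v, 's, 'x) dblcat_scheme \<Rightarrow> ('o, 'h, 's) twocat" where
  "Hcat A = \<lparr> Obj = Ob A, Mor1 = HMor A,
     Mor2 = {s \<in> Sq A. sq_left A s = vid A (hdom A (sq_top A s)) \<and> sq_right A s = vid A (hcod A (sq_top A s))},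
     dom1 = hdom A, cod1 = hcod A, dom2 = sq_top A, cod2 = sq_bot A,
     comp1 = hcomp A, id1 = hid A, vcomp2 = sq_vcomp A, hcomp2 = sq_hcomp A, id2 = sq_vid A \<rparr>"

text \<open>A 2-cell of V A is recorded as a quadruple (al, be, s0, s1): a 2-cell
  from the square al to the square be given by the pair of squares (s0, s1).\<close>

definition Vcat :: "('o, 'h, 'v, 's, 'x) dblcat_scheme \<Rightarrow> ('v, 's, 's \<times> 's \<times> 's \<times> 's) twocat" where
  "Vcat A = \<lparr> Obj = VMor A, Mor1 = Sq A,
     Mor2 = {(al, be, s0, s1). al \<in> Sq A \<and> be \<in> Sq A \<and>
        sq_left A al = sq_left A be \<and> sq_right A al = sq_right A be \<and>
        s0 \<in> Sq A \<and> sq_left A s0 = vid A (vdom A (sq_left A al)) \<and> sq_right A s0 = vid A (vdom A (sq_right A al)) \<and>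
        sq_top A s0 = sq_top A al \<and> sq_bot A s0 = sq_top A be \<and>
        s1 \<in> Sq A \<and> sq_left A s1 = vid A (vcod A (sq_left A al)) \<and> sq_right A s1 = vid A (vcod A (sq_right A al)) \<and>
        sq_top A s1 = sq_bot A al \<and> sq_bot A s1 = sq_bot A be \<and>
        sq_vcomp A s0 be = sq_vcomp A al s1},
     dom1 = sq_left A, cod1 = sq_right A,
     dom2 = (\<lambda>(al, be, s0, s1). al), cod2 = (\<lambda>(al, be, s0, s1). be),
     comp1 = sq_hcomp A, id1 = sq_hid A,
     vcomp2 = (\<lambda>(al, be, s0, s1) (al', be', t0, t1). (al, be', sq_vcomp A s0 t0, sq_vcomp A s1 t1)),
     hcomp2 = (\<lambda>(al, be, s0, s1) (al', be', t0, t1).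
        (sq_hcomp A al al', sq_hcomp A be be', sq_hcomp A s0 t0, sq_hcomp A s1 t1)),
     id2 = (\<lambda>al. (al, al, sq_vid A (sq_top A al), sq_vid A (sq_bot A al))) \<rparr>"

definition Hfun :: "('o1, 'h1, 'v1, 's1, 'o2, 'h2, 'v2, 's2) dblfun \<Rightarrow> ('o1, 'h1, 's1, 'o2, 'h2, 's2) twofun" where
  "Hfun F = \<lparr> gob = fob F, gm1 = fh F, gm2 = fsq F \<rparr>"

definition Vfun :: "('o1, 'h1, 'v1, 's1, 'o2, 'h2, 'v2, 's2) dblfun \<Rightarrow>
    ('v1, 's1, 's1 \<times> 's1 \<times> 's1 \<times> 's1, 'v2, 's2, 's2 \<times> 's2 \<times> 's2 \<times> 's2) twofun" where
  "Vfun F = \<lparr> gob = fv F, gm1 = fsq F,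
     gm2 = (\<lambda>(al, be, s0, s1). (fsq F al, fsq F be, fsq F s0, fsq F s1)) \<rparr>"

definition horiz_equivalence :: "('o, 'h, 'v, 's, 'x) dblcat_scheme \<Rightarrow> 'h \<Rightarrow> bool" where
  "horiz_equivalence A a \<longleftrightarrow> equiv1 (Hcat A) a"

definition vert_invertible :: "('o, 'h, 'v, 's, 'x) dblcat_scheme \<Rightarrow> 's \<Rightarrow> bool" where
  "vert_invertible A s \<longleftrightarrow> s \<in> Sq A \<and>
    (\<exists>t\<in>Sq A. sq_top A t = sq_bot A s \<and> sq_bot A t = sq_top A s \<and>
       sq_vcomp A s t = sq_vid A (sq_top A s) \<and> sq_vcomp A t s = sq_vid A (sq_bot A s))"

definition weakly_horiz_invertible :: "('o, 'h, 'v, 's, 'x) dblcat_scheme \<Rightarrow> 's \<Rightarrow> bool" where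
  "weakly_horiz_invertible A s \<longleftrightarrow> equiv1 (Vcat A) s"

definition double_fibration ::
  "('o1, 'h1, 'v1, 's1, 'x) dblcat_scheme \<Rightarrow> ('o2, 'h2, 'v2, 's2, 'y) dblcat_scheme \<Rightarrow>
   ('o1, 'h1, 'v1, 's1, 'o2, 'h2, 'v2, 's2) dblfun \<Rightarrow> bool" where
  "double_fibration A B F \<longleftrightarrow>
    \<comment> \<open>(df1)\<close>
    (\<forall>b C. C \<in> Ob A \<longrightarrow> horiz_equivalence B b \<longrightarrow> hcod B b = fob F C \<longrightarrow>
        (\<exists>a. horiz_equivalence A a \<and> hcod A a = C \<and> fh F a = b)) \<and>
    \<comment> \<open>(df2)\<close>
    (\<forall>c be. c \<in> HMor A \<longrightarrow> vert_invertible B be \<longrightarrow>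
        sq_left B be = vid B (fob F (hdom A c)) \<longrightarrow> sq_right B be = vid B (fob F (hcod A c)) \<longrightarrow>
        sq_bot B be = fh F c \<longrightarrow>
        (\<exists>al. vert_invertible A al \<and> sq_left A al = vid A (hdom A c) \<and>
              sq_right A al = vid A (hcod A c) \<and> sq_bot A al = c \<and> fsq F al = be)) \<and>
    \<comment> \<open>(df3)\<close>
    (\<forall>u' be. u' \<in> VMor A \<longrightarrow> weakly_horiz_invertible B be \<longrightarrow> sq_right B be = fv F u' \<longrightarrow>
        (\<exists>al. weakly_horiz_invertible A al \<and> sq_right A al = u' \<and> fsq F al = be))"

end

theory Submission
  imports Defs
begin

locale dc = fixes D :: "('o,'h,'v,'s,'x) dblcat_scheme" assumes ax: "double_category D"
begin
lemma hbd: "a \<in> HMor D \<Longrightarrow> hdom D a \<in> Ob D \<and> hcod D a \<in> Ob D" using ax unfolding double_category_def by (elim conjE) blast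
lemma vbd: "u \<in> VMor D \<Longrightarrow> vdom D u \<in> Ob D \<and> vcod D u \<in> Ob D" using ax unfolding double_category_def by (elim conjE) blast
lemma vid: "X \<in> Ob D \<Longrightarrow> vid D X \<in> VMor D \<and> vdom D (vid D X) = X \<and> vcod D (vid D X) = X" using ax unfolding double_category_def by (elim conjE) blast
lemma vcomp: "u \<in> VMor D \<Longrightarrow> v \<in> VMor D \<Longrightarrow> vcod D u = vdom D v \<Longrightarrow>
        vcomp D u v \<in> VMor D \<and> vdom D (vcomp D u v) = vdom D u \<and> vcod D (vcomp D u v) = vcod D v" using ax unfolding double_category_def by (elim conjE) blast
lemma vcomp_id: "u \<in> VMor D \<Longrightarrow> vcomp D (vid D (vdom D u)) u = u \<and> vcomp D u (vid D (vcod D u)) = u" using ax unfolding double_category_def by (elim conjE) blast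
lemma sqbd: "s \<in> Sq D \<Longrightarrow> sq_top D s \<in> HMor D \<and> sq_bot D s \<in> HMor D \<and>
        sq_left D s \<in> VMor D \<and> sq_right D s \<in> VMor D \<and>
        hdom D (sq_top D s) = vdom D (sq_left D s) \<and> hcod D (sq_top D s) = vdom D (sq_right D s) \<and>
        hdom D (sq_bot D s) = vcod D (sq_left D s) \<and> hcod D (sq_bot D s) = vcod D (sq_right D s)" using ax unfolding double_category_def by (elim conjE) blast
lemma ax_sqvid: "\<forall>a\<in>HMor D. sq_vid D a \<in> Sq D \<and> sq_top D (sq_vid D a) = a \<and> sq_bot D (sq_vid D a) = a \<and>
        sq_left D (sq_vid D a) = vid D (hdom D a) \<and> sq_right D (sq_vid D a) = vid D (hcod D a)"
  using ax unfolding double_category_def by (elim conjE) assumption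
lemma ax_sqvc: "\<forall>s\<in>Sq D. \<forall>t\<in>Sq D. sq_bot D s = sq_top D t \<longrightarrow>
        sq_vcomp D s t \<in> Sq D \<and>
        sq_top D (sq_vcomp D s t) = sq_top D s \<and> sq_bot D (sq_vcomp D s t) = sq_bot D t \<and>
        sq_left D (sq_vcomp D s t) = vcomp D (sq_left D s) (sq_left D t) \<and>
        sq_right D (sq_vcomp D s t) = vcomp D (sq_right D s) (sq_right D t)"
  using ax unfolding double_category_def by (elim conjE) assumption
lemma ax_sqvc_id: "\<forall>s\<in>Sq D. sq_vcomp D (sq_vid D (sq_top D s)) s = s \<and> sq_vcomp D s (sq_vid D (sq_bot D s)) = s"
  using ax unfolding double_category_def by (elim conjE) assumption
lemma ax_sqvc_assoc: "\<forall>s\<in>Sq D. \<forall>t\<in>Sq D. \<forall>r\<in>Sq D. sq_bot D s = sq_top D t \<longrightarrow> sq_bot D t = sq_top D r \<longrightarrow>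
        sq_vcomp D (sq_vcomp D s t) r = sq_vcomp D s (sq_vcomp D t r)"
  using ax unfolding double_category_def by (elim conjE) assumption
lemma sqvid: "a \<in> HMor D \<Longrightarrow> sq_vid D a \<in> Sq D \<and> sq_top D (sq_vid D a) = a \<and> sq_bot D (sq_vid D a) = a \<and>
        sq_left D (sq_vid D a) = vid D (hdom D a) \<and> sq_right D (sq_vid D a) = vid D (hcod D a)" using ax_sqvid by blast
lemma sqvc: "s \<in> Sq D \<Longrightarrow> t \<in> Sq D \<Longrightarrow> sq_bot D s = sq_top D t \<Longrightarrow>
        sq_vcomp D s t \<in> Sq D \<and>
        sq_top D (sq_vcomp D s t) = sq_top D s \<and> sq_bot D (sq_vcomp D s t) = sq_bot D t \<and>
        sq_left D (sq_vcomp D s t) = vcomp D (sq_left D s) (sq_left D t) \<and>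
        sq_right D (sq_vcomp D s t) = vcomp D (sq_right D s) (sq_right D t)" using ax_sqvc by blast
lemma sqvc_id: "s \<in> Sq D \<Longrightarrow> sq_vcomp D (sq_vid D (sq_top D s)) s = s \<and> sq_vcomp D s (sq_vid D (sq_bot D s)) = s" using ax_sqvc_id by blast
lemma sqvc_assoc: "s \<in> Sq D \<Longrightarrow> t \<in> Sq D \<Longrightarrow> r \<in> Sq D \<Longrightarrow> sq_bot D s = sq_top D t \<Longrightarrow> sq_bot D t = sq_top D r \<Longrightarrow>
        sq_vcomp D (sq_vcomp D s t) r = sq_vcomp D s (sq_vcomp D t r)" using ax_sqvc_assoc by blast

definition vinv where "vinv s t \<longleftrightarrow> s \<in> Sq D \<and> t \<in> Sq D \<and> sq_top D t = sq_bot D s \<and> sq_bot D t = sq_top D s \<and>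
       sq_vcomp D s t = sq_vid D (sq_top D s) \<and> sq_vcomp D t s = sq_vid D (sq_bot D s)"

lemma vert_inv_iff: "vert_invertible D s \<longleftrightarrow> (\<exists>t. vinv s t)"
  unfolding vert_invertible_def vinv_def by blast

lemma vinv_sym: "vinv s t \<Longrightarrow> vinv t s" unfolding vinv_def by auto

lemma vinv_bd:
  assumes v: "vinv s t" and l: "sq_left D s = vid D (hdom D (sq_top D s))" and r: "sq_right D s = vid D (hcod D (sq_top D s))"
  shows "sq_left D t = sq_left D s \<and> sq_right D t = sq_right D s \<and> hdom D (sq_bot D s) = hdom D (sq_top D s)
     \<and> hcod D (sq_bot D s) = hcod D (sq_top D s)"
proof -
  have s: "s \<in> Sq D" and t: "t \<in> Sq D" and tt: "sq_top D t = sq_bot D s" and bt: "sq_bot D t = sq_top D s"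
    and c: "sq_vcomp D s t = sq_vid D (sq_top D s)" using v unfolding vinv_def by auto
  let ?X = "hdom D (sq_top D s)" and ?Y = "hcod D (sq_top D s)"
  have X: "?X \<in> Ob D" "?Y \<in> Ob D" using hbd sqbd s by blast+
  have hb: "hdom D (sq_bot D s) = ?X" using sqbd[OF s] vid[OF X(1)] l by simp
  have hc: "hcod D (sq_bot D s) = ?Y" using sqbd[OF s] vid[OF X(2)] r by simp
  have "sq_left D (sq_vcomp D s t) = vcomp D (vid D ?X) (sq_left D t)" using sqvc[OF s t] tt l by simp
  also have "\<dots> = sq_left D t" using vcomp_id[of "sq_left D t"] sqbd[OF t] tt hb by simp
  finally have 1: "sq_left D t = vid D ?X" using c sqvid sqbd[OF s] by simp
  have "sq_right D (sq_vcomp D s t) = vcomp D (vid D ?Y) (sq_right D t)" using sqvc[OF s t] tt r by simp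
  also have "\<dots> = sq_right D t" using vcomp_id[of "sq_right D t"] sqbd[OF t] tt hc by simp
  finally have 2: "sq_right D t = vid D ?Y" using c sqvid sqbd[OF s] by simp
  show ?thesis using 1 2 l r hb hc by simp
qed
end


lemma (in dc) hcell_iff:
  assumes s: "s \<in> Sq D" and X: "X \<in> Ob D" "Y \<in> Ob D" and h: "hdom D (sq_bot D s) = X" "hcod D (sq_bot D s) = Y"
  shows "(sq_left D s = vid D (hdom D (sq_top D s)) \<and> sq_right D s = vid D (hcod D (sq_top D s)))
     \<longleftrightarrow> (sq_left D s = vid D X \<and> sq_right D s = vid D Y)"
proof
  assume a: "sq_left D s = vid D (hdom D (sq_top D s)) \<and> sq_right D s = vid D (hcod D (sq_top D s))"
  have "hdom D (sq_top D s) \<in> Ob D" "hcod D (sq_top D s) \<in> Ob D" using sqbd[OF s] hbd by blast+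
  then show "sq_left D s = vid D X \<and> sq_right D s = vid D Y" using a sqbd[OF s] vid h by metis
next
  assume a: "sq_left D s = vid D X \<and> sq_right D s = vid D Y"
  then show "sq_left D s = vid D (hdom D (sq_top D s)) \<and> sq_right D s = vid D (hcod D (sq_top D s))"
    using sqbd[OF s] vid[OF X(1)] vid[OF X(2)] by metis
qed

lemma Hcat_sel[simp]: "Obj (Hcat A) = Ob A" "Mor1 (Hcat A) = HMor A"
  "Mor2 (Hcat A) = {s \<in> Sq A. sq_left A s = vid A (hdom A (sq_top A s)) \<and> sq_right A s = vid A (hcod A (sq_top A s))}"
  "dom1 (Hcat A) = hdom A" "cod1 (Hcat A) = hcod A" "dom2 (Hcat A) = sq_top A" "cod2 (Hcat A) = sq_bot A"
  "vcomp2 (Hcat A) = sq_vcomp A" "id2 (Hcat A) = sq_vid A"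
  by (simp_all add: Hcat_def)

lemma Hfun_sel[simp]: "gob (Hfun F) = fob F" "gm1 (Hfun F) = fh F" "gm2 (Hfun F) = fsq F"
  by (simp_all add: Hfun_def)

lemma Vfun_sel[simp]: "gob (Vfun F) = fv F" "gm1 (Vfun F) = fsq F"
  "gm2 (Vfun F) (al, be, s0, s1) = (fsq F al, fsq F be, fsq F s0, fsq F s1)"
  by (simp_all add: Vfun_def)

lemma Vcat_sel[simp]: "Obj (Vcat A) = VMor A" "Mor1 (Vcat A) = Sq A"
  "dom1 (Vcat A) = sq_left A" "cod1 (Vcat A) = sq_right A"
  "dom2 (Vcat A) (al, be, s0, s1) = al" "cod2 (Vcat A) (al, be, s0, s1) = be"
  "vcomp2 (Vcat A) (al, be, s0, s1) (al', be', t0, t1) = (al, be', sq_vcomp A s0 t0, sq_vcomp A s1 t1)"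
  "id2 (Vcat A) al = (al, al, sq_vid A (sq_top A al), sq_vid A (sq_bot A al))"
  "(al, be, s0, s1) \<in> Mor2 (Vcat A) \<longleftrightarrow> (al \<in> Sq A \<and> be \<in> Sq A \<and>
        sq_left A al = sq_left A be \<and> sq_right A al = sq_right A be \<and>
        s0 \<in> Sq A \<and> sq_left A s0 = vid A (vdom A (sq_left A al)) \<and> sq_right A s0 = vid A (vdom A (sq_right A al)) \<and>
        sq_top A s0 = sq_top A al \<and> sq_bot A s0 = sq_top A be \<and>
        s1 \<in> Sq A \<and> sq_left A s1 = vid A (vcod A (sq_left A al)) \<and> sq_right A s1 = vid A (vcod A (sq_right A al)) \<and>
        sq_top A s1 = sq_bot A al \<and> sq_bot A s1 = sq_bot A be \<and>
        sq_vcomp A s0 be = sq_vcomp A al s1)"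
  by (simp_all add: Vcat_def)

lemma (in dc) iso2_H: "iso2 (Hcat D) s \<longleftrightarrow> vert_invertible D s \<and> sq_left D s = vid D (hdom D (sq_top D s))
    \<and> sq_right D s = vid D (hcod D (sq_top D s))"
proof
  assume "iso2 (Hcat D) s"
  then show "vert_invertible D s \<and> sq_left D s = vid D (hdom D (sq_top D s)) \<and> sq_right D s = vid D (hcod D (sq_top D s))"
    unfolding iso2_def vert_invertible_def by auto
next
  assume a: "vert_invertible D s \<and> sq_left D s = vid D (hdom D (sq_top D s)) \<and> sq_right D s = vid D (hcod D (sq_top D s))"
  then obtain t where v: "vinv s t" using vert_inv_iff by blast
  have b: "sq_left D t = sq_left D s \<and> sq_right D t = sq_right D s \<and> hdom D (sq_bot D s) = hdom D (sq_top D s)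
     \<and> hcod D (sq_bot D s) = hcod D (sq_top D s)" using vinv_bd[OF v] a by blast
  show "iso2 (Hcat D) s" unfolding iso2_def using v a b unfolding vinv_def by auto
qed


locale dfn = A: dc A + B: dc B for A :: "('o1, 'h1, 'v1, 's1) dblcat" and B :: "('o2, 'h2, 'v2, 's2) dblcat" +
  fixes F :: "('o1, 'h1, 'v1, 's1, 'o2, 'h2, 'v2, 's2) dblfun"
  assumes fn: "double_functor A B F"
begin
lemma ax_ob: "\<forall>X\<in>Ob A. fob F X \<in> Ob B" using fn unfolding double_functor_def by (elim conjE) assumption
lemma ax_h: "\<forall>a\<in>HMor A. fh F a \<in> HMor B \<and> hdom B (fh F a) = fob F (hdom A a) \<and> hcod B (fh F a) = fob F (hcod A a)"
  using fn unfolding double_functor_def by (elim conjE) assumption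
lemma ax_v: "\<forall>u\<in>VMor A. fv F u \<in> VMor B \<and> vdom B (fv F u) = fob F (vdom A u) \<and> vcod B (fv F u) = fob F (vcod A u)"
  using fn unfolding double_functor_def by (elim conjE) assumption
lemma ax_s: "\<forall>s\<in>Sq A. fsq F s \<in> Sq B \<and>
        sq_top B (fsq F s) = fh F (sq_top A s) \<and> sq_bot B (fsq F s) = fh F (sq_bot A s) \<and>
        sq_left B (fsq F s) = fv F (sq_left A s) \<and> sq_right B (fsq F s) = fv F (sq_right A s)"
  using fn unfolding double_functor_def by (elim conjE) assumption
lemma ax_id: "\<forall>X\<in>Ob A. fh F (hid A X) = hid B (fob F X) \<and> fv F (vid A X) = vid B (fob F X)"
  using fn unfolding double_functor_def by (elim conjE) assumption
lemma ax_svid: "\<forall>a\<in>HMor A. fsq F (sq_vid A a) = sq_vid B (fh F a)"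
  using fn unfolding double_functor_def by (elim conjE) assumption
lemma ax_svc: "\<forall>s\<in>Sq A. \<forall>t\<in>Sq A. sq_bot A s = sq_top A t \<longrightarrow> fsq F (sq_vcomp A s t) = sq_vcomp B (fsq F s) (fsq F t)"
  using fn unfolding double_functor_def by (elim conjE) assumption

lemma Fob: "X \<in> Ob A \<Longrightarrow> fob F X \<in> Ob B" using ax_ob by blast
lemma Fh: "a \<in> HMor A \<Longrightarrow> fh F a \<in> HMor B \<and> hdom B (fh F a) = fob F (hdom A a) \<and> hcod B (fh F a) = fob F (hcod A a)" using ax_h by blast
lemma Fv: "u \<in> VMor A \<Longrightarrow> fv F u \<in> VMor B \<and> vdom B (fv F u) = fob F (vdom A u) \<and> vcod B (fv F u) = fob F (vcod A u)" using ax_v by blast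
lemma Fs: "s \<in> Sq A \<Longrightarrow> fsq F s \<in> Sq B \<and>
        sq_top B (fsq F s) = fh F (sq_top A s) \<and> sq_bot B (fsq F s) = fh F (sq_bot A s) \<and>
        sq_left B (fsq F s) = fv F (sq_left A s) \<and> sq_right B (fsq F s) = fv F (sq_right A s)" using ax_s by blast
lemma Fid: "X \<in> Ob A \<Longrightarrow> fh F (hid A X) = hid B (fob F X) \<and> fv F (vid A X) = vid B (fob F X)" using ax_id by blast
lemma Fsvid: "a \<in> HMor A \<Longrightarrow> fsq F (sq_vid A a) = sq_vid B (fh F a)" using ax_svid by blast
lemma Fsvc: "s \<in> Sq A \<Longrightarrow> t \<in> Sq A \<Longrightarrow> sq_bot A s = sq_top A t \<Longrightarrow> fsq F (sq_vcomp A s t) = sq_vcomp B (fsq F s) (fsq F t)"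
  using ax_svc by blast

lemma H_f2_iff:
  "(\<forall>c be. c \<in> Mor1 (Hcat A) \<longrightarrow> iso2 (Hcat B) be \<longrightarrow> cod2 (Hcat B) be = gm1 (Hfun F) c \<longrightarrow>
        (\<exists>al. iso2 (Hcat A) al \<and> cod2 (Hcat A) al = c \<and> gm2 (Hfun F) al = be))
   \<longleftrightarrow> (\<forall>c be. c \<in> HMor A \<longrightarrow> vert_invertible B be \<longrightarrow>
        sq_left B be = vid B (fob F (hdom A c)) \<longrightarrow> sq_right B be = vid B (fob F (hcod A c)) \<longrightarrow>
        sq_bot B be = fh F c \<longrightarrow>
        (\<exists>al. vert_invertible A al \<and> sq_left A al = vid A (hdom A c) \<and>
              sq_right A al = vid A (hcod A c) \<and> sq_bot A al = c \<and> fsq F al = be))"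
proof -
  have eB: "(iso2 (Hcat B) be \<and> sq_bot B be = fh F c) \<longleftrightarrow> (vert_invertible B be \<and>
        sq_left B be = vid B (fob F (hdom A c)) \<and> sq_right B be = vid B (fob F (hcod A c)) \<and>
        sq_bot B be = fh F c)" if c: "c \<in> HMor A" for c be
  proof (cases "vert_invertible B be \<and> sq_bot B be = fh F c")
    case True
    have "be \<in> Sq B" using True unfolding vert_invertible_def by blast
    then show ?thesis using B.hcell_iff[of be "fob F (hdom A c)" "fob F (hcod A c)"] B.iso2_H True Fh[OF c] Fob A.hbd[OF c]
      by auto
  next
    case False then show ?thesis using B.iso2_H by blast
  qed
  have eA: "(iso2 (Hcat A) al \<and> sq_bot A al = c) \<longleftrightarrow> (vert_invertible A al \<and>
        sq_left A al = vid A (hdom A c) \<and> sq_right A al = vid A (hcod A c) \<and>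
        sq_bot A al = c)" if c: "c \<in> HMor A" for c al
  proof (cases "vert_invertible A al \<and> sq_bot A al = c")
    case True
    have "al \<in> Sq A" using True unfolding vert_invertible_def by blast
    then show ?thesis using A.hcell_iff[of al "hdom A c" "hcod A c"] A.iso2_H True A.hbd[OF c]
      by auto
  next
    case False then show ?thesis using A.iso2_H by blast
  qed
  show ?thesis using eA eB by simp metis
qed
end


lemma (in dfn) V_f2:
  assumes df2: "\<forall>c be. c \<in> HMor A \<longrightarrow> vert_invertible B be \<longrightarrow>
        sq_left B be = vid B (fob F (hdom A c)) \<longrightarrow> sq_right B be = vid B (fob F (hcod A c)) \<longrightarrow>
        sq_bot B be = fh F c \<longrightarrow>
        (\<exists>al. vert_invertible A al \<and> sq_left A al = vid A (hdom A c) \<and>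
              sq_right A al = vid A (hcod A c) \<and> sq_bot A al = c \<and> fsq F al = be)"
  shows "\<forall>c be. c \<in> Mor1 (Vcat A) \<longrightarrow> iso2 (Vcat B) be \<longrightarrow> cod2 (Vcat B) be = gm1 (Vfun F) c \<longrightarrow>
        (\<exists>al. iso2 (Vcat A) al \<and> cod2 (Vcat A) al = c \<and> gm2 (Vfun F) al = be)"
proof (intro allI impI)
  fix c be
  assume c: "c \<in> Mor1 (Vcat A)" and iso: "iso2 (Vcat B) be" and cd: "cod2 (Vcat B) be = gm1 (Vfun F) c"
  have cS: "c \<in> Sq A" using c by simp
  obtain be' b2 sg0 sg1 where beq: "be = (be', b2, sg0, sg1)" by (cases be) auto
  have b2: "b2 = fsq F c" using cd beq by simp
  from iso obtain th' where th': "th' \<in> Mor2 (Vcat B)" "dom2 (Vcat B) th' = cod2 (Vcat B) be"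
     "cod2 (Vcat B) th' = dom2 (Vcat B) be" "vcomp2 (Vcat B) be th' = id2 (Vcat B) (dom2 (Vcat B) be)"
     "vcomp2 (Vcat B) th' be = id2 (Vcat B) (cod2 (Vcat B) be)" and beM: "be \<in> Mor2 (Vcat B)"
    unfolding iso2_def by blast
  obtain x y t0 t1 where theq: "th' = (x, y, t0, t1)" by (cases th') auto
  have xy: "x = b2" "y = be'" using th'(2,3) theq beq by simp_all
  note M1 = beM[unfolded beq b2 Vcat_sel]
  note M2 = th'(1)[unfolded theq xy b2 Vcat_sel]
  have E1: "sq_vcomp B sg0 t0 = sq_vid B (sq_top B be')" "sq_vcomp B sg1 t1 = sq_vid B (sq_bot B be')"
    using th'(4) unfolding theq beq xy by simp_all
  have E2: "sq_vcomp B t0 sg0 = sq_vid B (sq_top B (fsq F c))" "sq_vcomp B t1 sg1 = sq_vid B (sq_bot B (fsq F c))"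
    using th'(5) unfolding theq beq xy b2 by simp_all
  have Fc: "fsq F c \<in> Sq B \<and> sq_top B (fsq F c) = fh F (sq_top A c) \<and> sq_bot B (fsq F c) = fh F (sq_bot A c) \<and>
        sq_left B (fsq F c) = fv F (sq_left A c) \<and> sq_right B (fsq F c) = fv F (sq_right A c)" using Fs[OF cS] .
  have cb: "sq_top A c \<in> HMor A \<and> sq_bot A c \<in> HMor A \<and>
        sq_left A c \<in> VMor A \<and> sq_right A c \<in> VMor A \<and>
        hdom A (sq_top A c) = vdom A (sq_left A c) \<and> hcod A (sq_top A c) = vdom A (sq_right A c) \<and>
        hdom A (sq_bot A c) = vcod A (sq_left A c) \<and> hcod A (sq_bot A c) = vcod A (sq_right A c)" using A.sqbd[OF cS] .
  have vi0: "vert_invertible B sg0" unfolding vert_invertible_def using M1 M2 E1 E2 by auto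
  have vi1: "vert_invertible B sg1" unfolding vert_invertible_def using M1 M2 E1 E2 by auto
  obtain a0 where a0: "vert_invertible A a0" "sq_left A a0 = vid A (hdom A (sq_top A c))"
     "sq_right A a0 = vid A (hcod A (sq_top A c))" "sq_bot A a0 = sq_top A c" "fsq F a0 = sg0"
    using df2[rule_format, of "sq_top A c" sg0] vi0 M1 Fc cb Fv by auto
  obtain a1 where a1: "vert_invertible A a1" "sq_left A a1 = vid A (hdom A (sq_bot A c))"
     "sq_right A a1 = vid A (hcod A (sq_bot A c))" "sq_bot A a1 = sq_bot A c" "fsq F a1 = sg1"
    using df2[rule_format, of "sq_bot A c" sg1] vi1 M1 Fc cb Fv by auto
  obtain a0i where v0: "A.vinv a0 a0i" using a0(1) A.vert_inv_iff by blast
  obtain a1i where v1: "A.vinv a1 a1i" using a1(1) A.vert_inv_iff by blast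
  have a0S: "a0 \<in> Sq A" "a0i \<in> Sq A" and a1S: "a1 \<in> Sq A" "a1i \<in> Sq A" using v0 v1 unfolding A.vinv_def by auto
  have ht0: "hdom A (sq_top A a0) = hdom A (sq_top A c)" "hcod A (sq_top A a0) = hcod A (sq_top A c)"
  proof -
    have "hdom A (sq_top A c) \<in> Ob A" "hcod A (sq_top A c) \<in> Ob A" using cb A.hbd by blast+
    then show "hdom A (sq_top A a0) = hdom A (sq_top A c)" "hcod A (sq_top A a0) = hcod A (sq_top A c)"
      using A.sqbd[OF a0S(1)] a0(2,3) A.vid by simp_all
  qed
  have ht1: "hdom A (sq_top A a1) = hdom A (sq_bot A c)" "hcod A (sq_top A a1) = hcod A (sq_bot A c)"
  proof -
    have "hdom A (sq_bot A c) \<in> Ob A" "hcod A (sq_bot A c) \<in> Ob A" using cb A.hbd by blast+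
    then show "hdom A (sq_top A a1) = hdom A (sq_bot A c)" "hcod A (sq_top A a1) = hcod A (sq_bot A c)"
      using A.sqbd[OF a1S(1)] a1(2,3) A.vid by simp_all
  qed
  have bd0: "sq_left A a0i = sq_left A a0" "sq_right A a0i = sq_right A a0"
    using A.vinv_bd[OF v0] a0(2,3) ht0 by auto
  have bd1: "sq_left A a1i = sq_left A a1" "sq_right A a1i = sq_right A a1"
    using A.vinv_bd[OF v1] a1(2,3) ht1 by auto
  have i0: "sq_top A a0i = sq_top A c" "sq_bot A a0i = sq_top A a0" "sq_vcomp A a0 a0i = sq_vid A (sq_top A a0)"
     "sq_vcomp A a0i a0 = sq_vid A (sq_top A c)" using v0 a0(4) unfolding A.vinv_def by auto
  have i1: "sq_top A a1i = sq_bot A c" "sq_bot A a1i = sq_top A a1" "sq_vcomp A a1 a1i = sq_vid A (sq_top A a1)"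
     "sq_vcomp A a1i a1 = sq_vid A (sq_bot A c)" using v1 a1(4) unfolding A.vinv_def by auto
  define p where "p = sq_vcomp A a0 c"
  have pS: "p \<in> Sq A" "sq_top A p = sq_top A a0" "sq_bot A p = sq_bot A c"
    "sq_left A p = vcomp A (sq_left A a0) (sq_left A c)" "sq_right A p = vcomp A (sq_right A a0) (sq_right A c)"
    using A.sqvc[OF a0S(1) cS] a0(4) unfolding p_def by auto
  have pl: "sq_left A p = sq_left A c" "sq_right A p = sq_right A c"
    using pS(4,5) a0(2,3) cb A.vcomp_id by auto
  define al' where "al' = sq_vcomp A p a1i"
  have alS: "al' \<in> Sq A" "sq_top A al' = sq_top A a0" "sq_bot A al' = sq_top A a1"
    "sq_left A al' = vcomp A (sq_left A p) (sq_left A a1i)" "sq_right A al' = vcomp A (sq_right A p) (sq_right A a1i)"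
    using A.sqvc[OF pS(1) a1S(2)] pS i1 unfolding al'_def by auto
  have all: "sq_left A al' = sq_left A c" "sq_right A al' = sq_right A c"
    using alS(4,5) pl bd1 a1(2,3) cb A.vcomp_id by auto
  have eq1: "sq_vcomp A al' a1 = p"
  proof -
    have "sq_vcomp A al' a1 = sq_vcomp A p (sq_vcomp A a1i a1)"
      unfolding al'_def using A.sqvc_assoc[OF pS(1) a1S(2) a1S(1)] pS i1 by simp
    also have "\<dots> = p" using i1 pS A.sqvc_id[OF pS(1)] by simp
    finally show ?thesis .
  qed
  have eq2: "sq_vcomp A a0i al' = sq_vcomp A c a1i"
  proof -
    have "sq_vcomp A a0i al' = sq_vcomp A (sq_vcomp A a0i p) a1i"
      unfolding al'_def using A.sqvc_assoc[OF a0S(2) pS(1) a1S(2)] pS i1 i0 by simp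
    also have "sq_vcomp A a0i p = sq_vcomp A (sq_vcomp A a0i a0) c"
      unfolding p_def using A.sqvc_assoc[OF a0S(2) a0S(1) cS] i0 a0 by simp
    also have "\<dots> = c" using i0 A.sqvc_id[OF cS] by simp
    finally show ?thesis .
  qed
  have vd: "vdom A (sq_left A c) = hdom A (sq_top A c)" "vdom A (sq_right A c) = hcod A (sq_top A c)"
     "vcod A (sq_left A c) = hdom A (sq_bot A c)" "vcod A (sq_right A c) = hcod A (sq_bot A c)" using cb by auto
  have mem: "(al', c, a0, a1) \<in> Mor2 (Vcat A)"
    unfolding Vcat_sel using alS all a0(2-4) a1(2-4) a0S a1S cS vd eq1 p_def by simp
  have mem': "(c, al', a0i, a1i) \<in> Mor2 (Vcat A)"
    unfolding Vcat_sel using alS all a0(2-4) a1(2-4) a0S a1S cS vd eq2 bd0 bd1 i0 i1 by simp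
  have iso: "iso2 (Vcat A) (al', c, a0, a1)"
    unfolding iso2_def
    apply (rule conjI[OF mem])
    apply (rule exI[of _ "(c, al', a0i, a1i)"])
    apply (simp only: Vcat_sel)
    using mem' i0(3,4) i1(3,4) alS(2,3) by simp
  have M1e: "sq_vcomp B sg0 (fsq F c) = sq_vcomp B be' sg1" "be' \<in> Sq B" "sg1 \<in> Sq B"
    "sq_top B sg1 = sq_bot B be'" "sq_bot B sg1 = sq_bot B (fsq F c)" using M1 by blast+
  have Fp: "fsq F p = sq_vcomp B be' sg1"
    using Fsvc[OF a0S(1) cS] a0(4,5) M1e(1) unfolding p_def by simp
  have Fa1i: "fsq F a1i \<in> Sq B" "sq_top B (fsq F a1i) = fh F (sq_bot A c)" using Fs[OF a1S(2)] i1(1) by simp_all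
  have Fa1: "fsq F a1 \<in> Sq B" "sq_top B (fsq F a1) = fh F (sq_top A a1)" using Fs[OF a1S(1)] by simp_all
  have Fal: "fsq F al' = be'"
  proof -
    have "fsq F al' = sq_vcomp B (sq_vcomp B be' sg1) (fsq F a1i)"
      using Fsvc[OF pS(1) a1S(2)] pS(3) i1(1) Fp unfolding al'_def by simp
    also have "\<dots> = sq_vcomp B be' (sq_vcomp B sg1 (fsq F a1i))"
      using B.sqvc_assoc[of be' sg1 "fsq F a1i"] M1e(2-5) Fa1i Fc by simp
    also have "sq_vcomp B sg1 (fsq F a1i) = fsq F (sq_vcomp A a1 a1i)"
      using Fsvc[OF a1S] i1(1) a1(4,5) by simp
    also have "\<dots> = sq_vid B (fh F (sq_top A a1))"
      using i1(3) Fsvid A.sqbd[OF a1S(1)] by simp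
    also have "fh F (sq_top A a1) = sq_bot B be'" using Fa1(2) a1(5) M1e(4) by simp
    also have "sq_vcomp B be' (sq_vid B (sq_bot B be')) = be'" using B.sqvc_id M1e(2) by blast
    finally show ?thesis .
  qed
  show "\<exists>al. iso2 (Vcat A) al \<and> cod2 (Vcat A) al = c \<and> gm2 (Vfun F) al = be"
    apply (rule exI[of _ "(al', c, a0, a1)"])
    using iso Fal a0(5) a1(5) beq b2 by simp
qed


theorem proposition3p13:
  fixes A :: "('o1, 'h1, 'v1, 's1) dblcat" and B :: "('o2, 'h2, 'v2, 's2) dblcat"
    and F :: "('o1, 'h1, 'v1, 's1, 'o2, 'h2, 'v2, 's2) dblfun"
  assumes "double_functor A B F"
  shows "double_fibration A B F \<longleftrightarrow>
           lack_fibration (Hcat A) (Hcat B) (Hfun F) \<and> lack_fibration (Vcat A) (Vcat B) (Vfun F)"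
proof -
  interpret dfn A B F
    using assms unfolding dfn_def dfn_axioms_def dc_def double_functor_def by blast
  let ?df1 = "\<forall>b C. C \<in> Ob A \<longrightarrow> horiz_equivalence B b \<longrightarrow> hcod B b = fob F C \<longrightarrow>
        (\<exists>a. horiz_equivalence A a \<and> hcod A a = C \<and> fh F a = b)"
  let ?df2 = "\<forall>c be. c \<in> HMor A \<longrightarrow> vert_invertible B be \<longrightarrow>
        sq_left B be = vid B (fob F (hdom A c)) \<longrightarrow> sq_right B be = vid B (fob F (hcod A c)) \<longrightarrow>
        sq_bot B be = fh F c \<longrightarrow>
        (\<exists>al. vert_invertible A al \<and> sq_left A al = vid A (hdom A c) \<and>
              sq_right A al = vid A (hcod A c) \<and> sq_bot A al = c \<and> fsq F al = be)"
  let ?df3 = "\<forall>u' be. u' \<in> VMor A \<longrightarrow> weakly_horiz_invertible B be \<longrightarrow> sq_right B be = fv F u' \<longrightarrow>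
        (\<exists>al. weakly_horiz_invertible A al \<and> sq_right A al = u' \<and> fsq F al = be)"
  let ?Hf1 = "\<forall>b Y. Y \<in> Obj (Hcat A) \<longrightarrow> equiv1 (Hcat B) b \<longrightarrow> cod1 (Hcat B) b = gob (Hfun F) Y \<longrightarrow>
        (\<exists>a. equiv1 (Hcat A) a \<and> cod1 (Hcat A) a = Y \<and> gm1 (Hfun F) a = b)"
  let ?Hf2 = "\<forall>c be. c \<in> Mor1 (Hcat A) \<longrightarrow> iso2 (Hcat B) be \<longrightarrow> cod2 (Hcat B) be = gm1 (Hfun F) c \<longrightarrow>
        (\<exists>al. iso2 (Hcat A) al \<and> cod2 (Hcat A) al = c \<and> gm2 (Hfun F) al = be)"
  let ?Vf1 = "\<forall>b Y. Y \<in> Obj (Vcat A) \<longrightarrow> equiv1 (Vcat B) b \<longrightarrow> cod1 (Vcat B) b = gob (Vfun F) Y \<longrightarrow>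
        (\<exists>a. equiv1 (Vcat A) a \<and> cod1 (Vcat A) a = Y \<and> gm1 (Vfun F) a = b)"
  let ?Vf2 = "\<forall>c be. c \<in> Mor1 (Vcat A) \<longrightarrow> iso2 (Vcat B) be \<longrightarrow> cod2 (Vcat B) be = gm1 (Vfun F) c \<longrightarrow>
        (\<exists>al. iso2 (Vcat A) al \<and> cod2 (Vcat A) al = c \<and> gm2 (Vfun F) al = be)"
  have D: "double_fibration A B F \<longleftrightarrow> ?df1 \<and> ?df2 \<and> ?df3" unfolding double_fibration_def ..
  have H: "lack_fibration (Hcat A) (Hcat B) (Hfun F) \<longleftrightarrow> ?Hf1 \<and> ?Hf2" unfolding lack_fibration_def ..
  have V: "lack_fibration (Vcat A) (Vcat B) (Vfun F) \<longleftrightarrow> ?Vf1 \<and> ?Vf2" unfolding lack_fibration_def ..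
  have e1: "?Hf1 \<longleftrightarrow> ?df1" unfolding horiz_equivalence_def by simp
  have e3: "?Vf1 \<longleftrightarrow> ?df3" unfolding weakly_horiz_invertible_def by auto
  have e2: "?Hf2 \<longleftrightarrow> ?df2" by (rule H_f2_iff)
  have v2: "?df2 \<Longrightarrow> ?Vf2" by (rule V_f2)
  show ?thesis using D H V e1 e2 e3 v2 by blast
qed

end
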